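(* For every integer $M$ there exists a graph $G$ with $\gamma_{\rm i}(G)-\mathrm{IR}(G)\ge M$.
   Context: For $S\subseteq V(G)$ and $x\in S$, a private neighbor of $x$ with respect to $S$ is a vertex of $N[S]\setminus N[S\setminus\{x\}]$, where $N[\cdot]$ denotes closed neighborhood; $S$ is irredundant if every vertex of $S$ has a private neighbor with respect to $S$, and $\mathrm{IR}(G)$ is the maximum size of a maximal irredundant set. Indicated domination game on $G$: two players, Dominator and Staller, alternate. In each round Dominator indicates a vertex $v$ not yet dominated by the vertices previously selected by Staller (a vertex dominates itself and its neighbors), and Staller must select a vertex of $N[v]$, adding it to a set $D$. The game ends when $D$ is a dominating set of $G$. Dominator wants to minimize $|D|$ and Staller to maximize it; the size of $D$ under optimal play of both is the indicated domination number $\gamma_{\rm i}(G)$. *)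

theory Defs
  imports Main
begin

definition simple_graph :: "'a set \<Rightarrow> ('a \<Rightarrow> 'a \<Rightarrow> bool) \<Rightarrow> bool" where
  "simple_graph V E \<longleftrightarrow> finite V \<and>
     (\<forall>x y. E x y \<longrightarrow> x \<in> V \<and> y \<in> V \<and> x \<noteq> y \<and> E y x)"

definition cnbhd :: "'a set \<Rightarrow> ('a \<Rightarrow> 'a \<Rightarrow> bool) \<Rightarrow> 'a set \<Rightarrow> 'a set" where
  "cnbhd V E S = {w \<in> V. \<exists>s\<in>S. w = s \<or> E s w}"

definition private_nbrs :: "'a set \<Rightarrow> ('a \<Rightarrow> 'a \<Rightarrow> bool) \<Rightarrow> 'a set \<Rightarrow> 'a \<Rightarrow> 'a set" where
  "private_nbrs V E S x = cnbhd V E S - cnbhd V E (S - {x})"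

definition irredundant :: "'a set \<Rightarrow> ('a \<Rightarrow> 'a \<Rightarrow> bool) \<Rightarrow> 'a set \<Rightarrow> bool" where
  "irredundant V E S \<longleftrightarrow> S \<subseteq> V \<and> (\<forall>x\<in>S. private_nbrs V E S x \<noteq> {})"

definition maximal_irredundant :: "'a set \<Rightarrow> ('a \<Rightarrow> 'a \<Rightarrow> bool) \<Rightarrow> 'a set \<Rightarrow> bool" where
  "maximal_irredundant V E S \<longleftrightarrow> irredundant V E S \<and>
     (\<forall>T. S \<subset> T \<and> T \<subseteq> V \<longrightarrow> \<not> irredundant V E T)"

definition upper_irredundance :: "'a set \<Rightarrow> ('a \<Rightarrow> 'a \<Rightarrow> bool) \<Rightarrow> nat" where
  "upper_irredundance V E = Max {card S | S. maximal_irredundant V E S}"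

definition dominates :: "'a set \<Rightarrow> ('a \<Rightarrow> 'a \<Rightarrow> bool) \<Rightarrow> 'a set \<Rightarrow> bool" where
  "dominates V E D \<longleftrightarrow> cnbhd V E D = V"

text \<open>Value of the indicated domination game from position D (the set of
  vertices selected by Staller so far), with a fuel bound k on the number of
  remaining rounds.  Every round adds a new vertex to D (a vertex of N[v] with v
  undominated is not in D), so the game lasts at most |V| rounds and fuel |V|
  from the empty position gives the exact optimal value.  Dominator (minimiser)
  indicates an undominated v, Staller (maximiser) selects u in N[v].\<close>
fun igame_val :: "'a set \<Rightarrow> ('a \<Rightarrow> 'a \<Rightarrow> bool) \<Rightarrow> nat \<Rightarrow> 'a set \<Rightarrow> nat" where
  "igame_val V E 0 D = 0"
| "igame_val V E (Suc k) D =
     (if dominates V E D then 0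
      else Min ((\<lambda>v. Max ((\<lambda>u. Suc (igame_val V E k (insert u D))) ` cnbhd V E {v}))
                ` (V - cnbhd V E D)))"

definition indicated_domination_number :: "'a set \<Rightarrow> ('a \<Rightarrow> 'a \<Rightarrow> bool) \<Rightarrow> nat" where
  "indicated_domination_number V E = igame_val V E (card V) {}"

end

theory Submission
  imports Defs
begin

definition adj5 :: "nat \<Rightarrow> nat \<Rightarrow> bool" where
  "adj5 p q \<longleftrightarrow> q = Suc p mod 5 \<or> p = Suc q mod 5"

definition nb5 :: "nat \<Rightarrow> nat \<Rightarrow> bool" where
  "nb5 p q \<longleftrightarrow> p = q \<or> adj5 p q"

definition Vm :: "nat \<Rightarrow> nat set" where
  "Vm m = {..<5*m}"

definition Em :: "nat \<Rightarrow> nat \<Rightarrow> nat \<Rightarrow> bool" where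
  "Em m x y \<longleftrightarrow> x < 5*m \<and> y < 5*m \<and> x div 5 = y div 5 \<and> adj5 (x mod 5) (y mod 5)"

lemma set5: "{0..<5::nat} = {0,1,2,3,4}" by auto

lemma posA_all: "\<forall>i\<in>{0..<5}. \<forall>j\<in>{0..<5}. \<forall>k\<in>{0..<5}. i \<noteq> j \<longrightarrow> i \<noteq> k \<longrightarrow> j \<noteq> k \<longrightarrow>
   \<not> ((\<exists>l\<in>{0..<5}. nb5 i l \<and> \<not> nb5 j l \<and> \<not> nb5 k l) \<and>
             (\<exists>l\<in>{0..<5}. nb5 j l \<and> \<not> nb5 i l \<and> \<not> nb5 k l) \<and>
             (\<exists>l\<in>{0..<5}. nb5 k l \<and> \<not> nb5 i l \<and> \<not> nb5 j l))"
  unfolding set5 by (simp add: nb5_def adj5_def)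

lemma posB_all: "\<forall>i\<in>{0..<5}. \<forall>j\<in>{0..<5}. \<not> nb5 i j \<longrightarrow> (\<exists>k\<in>{0..<5}. nb5 j k \<and> (\<exists>l\<in>{0..<5}. \<not> nb5 i l \<and> \<not> nb5 k l))"
  unfolding set5 by (simp add: nb5_def adj5_def)

lemma posC_all: "\<forall>j\<in>{0..<5}. \<not> nb5 ((j+2) mod 5) j"
  unfolding set5 by (simp add: nb5_def adj5_def)

lemma adjI_all: "\<forall>i\<in>{0..<5::nat}. \<not> adj5 i i"
  unfolding set5 by (simp add: adj5_def)

lemma adj5_irrefl: "i < 5 \<Longrightarrow> \<not> adj5 i i"
  using adjI_all by auto

lemma posA:
  assumes "i < 5" "j < 5" "k < 5" "i \<noteq> j" "i \<noteq> k" "j \<noteq> k"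
    "l1 < 5" "nb5 i l1" "\<not> nb5 j l1" "\<not> nb5 k l1"
    "l2 < 5" "nb5 j l2" "\<not> nb5 i l2" "\<not> nb5 k l2"
    "l3 < 5" "nb5 k l3" "\<not> nb5 i l3" "\<not> nb5 j l3"
  shows False
  using posA_all assms by (simp add: Ball_def Bex_def) blast

lemma posB:
  assumes "i < 5" "j < 5" "\<not> nb5 i j"
  obtains k l where "k < 5" "l < 5" "nb5 j k" "\<not> nb5 i l" "\<not> nb5 k l"
  using posB_all assms by (simp add: Ball_def Bex_def) blast

lemma sg: "simple_graph (Vm m) (Em m)"
  unfolding simple_graph_def Vm_def
proof (rule conjI, simp, intro allI impI)
  fix x y assume "Em m x y"
  then have h: "x < 5*m" "y < 5*m" "x div 5 = y div 5" "adj5 (x mod 5) (y mod 5)"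
    by (auto simp: Em_def)
  have "x mod 5 \<noteq> y mod 5" using h(4) adj5_irrefl[of "x mod 5"] by auto
  then have "x \<noteq> y" by auto
  moreover have "Em m y x" using h by (auto simp: Em_def adj5_def)
  ultimately show "x \<in> {..<5*m} \<and> y \<in> {..<5*m} \<and> x \<noteq> y \<and> Em m y x" using h by auto
qed

lemma cn_sub: "cnbhd V E D \<subseteq> V" by (auto simp: cnbhd_def)

lemma cn_insert: "cnbhd V E (insert u D) = cnbhd V E {u} \<union> cnbhd V E D"
  by (auto simp: cnbhd_def)

lemma cn_UN: "w \<in> cnbhd V E D \<longleftrightarrow> (\<exists>s\<in>D. w \<in> cnbhd V E {s})"
  by (auto simp: cnbhd_def)

lemma N1: "w \<in> cnbhd (Vm m) (Em m) {x} \<longleftrightarrow>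
     x < 5*m \<and> w < 5*m \<and> w div 5 = x div 5 \<and> nb5 (x mod 5) (w mod 5)"
proof
  assume "w \<in> cnbhd (Vm m) (Em m) {x}"
  then have "w < 5*m" and "w = x \<or> Em m x w" by (auto simp: cnbhd_def Vm_def)
  then show "x < 5*m \<and> w < 5*m \<and> w div 5 = x div 5 \<and> nb5 (x mod 5) (w mod 5)"
    by (auto simp: Em_def nb5_def)
next
  assume r: "x < 5*m \<and> w < 5*m \<and> w div 5 = x div 5 \<and> nb5 (x mod 5) (w mod 5)"
  show "w \<in> cnbhd (Vm m) (Em m) {x}"
  proof (cases "x mod 5 = w mod 5")
    case True then have "w = x" using r by (metis div_mult_mod_eq)
    then show ?thesis using r by (auto simp: cnbhd_def Vm_def)
  next
    case False then have "Em m x w" using r by (auto simp: Em_def nb5_def)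
    then show ?thesis using r by (auto simp: cnbhd_def Vm_def)
  qed
qed

lemma dm5: "k < 5 \<Longrightarrow> (5*b+k) div 5 = b \<and> (5*b+k) mod (5::nat) = k"
  by auto

lemma game_lb:
  fixes V :: "'a set" and phi :: "'a set \<Rightarrow> nat"
  assumes fin: "finite V"
    and dom0: "\<And>D. dominates V E D \<Longrightarrow> phi D = 0"
    and step: "\<And>D v. \<not> dominates V E D \<Longrightarrow> v \<in> V - cnbhd V E D \<Longrightarrow>
                 \<exists>u\<in>cnbhd V E {v}. phi D \<le> Suc (phi (insert u D))"
  shows "min k (phi D) \<le> igame_val V E k D"
proof (induction k arbitrary: D)
  case 0 then show ?case by simp
next
  case (Suc k)
  show ?case
  proof (cases "dominates V E D")
    case True then show ?thesis using dom0 by simp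
  next
    case False
    have ne: "V - cnbhd V E D \<noteq> {}" using False cn_sub[of V E D] by (auto simp: dominates_def)
    let ?F = "\<lambda>v. Max ((\<lambda>u. Suc (igame_val V E k (insert u D))) ` cnbhd V E {v})"
    have "\<forall>a\<in>?F ` (V - cnbhd V E D). min (Suc k) (phi D) \<le> a"
    proof
      fix a assume "a \<in> ?F ` (V - cnbhd V E D)"
      then obtain v where v: "v \<in> V - cnbhd V E D" and a: "a = ?F v" by auto
      obtain u where u: "u \<in> cnbhd V E {v}" and le: "phi D \<le> Suc (phi (insert u D))"
        using step[OF False v] by auto
      have "min (Suc k) (phi D) \<le> Suc (igame_val V E k (insert u D))"
        using Suc.IH[of "insert u D"] le by linarith
      also have "\<dots> \<le> a" unfolding a
        by (rule Max_ge) (use u fin cn_sub[of V E "{v}"] finite_subset in auto)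
      finally show "min (Suc k) (phi D) \<le> a" .
    qed
    then have "min (Suc k) (phi D) \<le> Min (?F ` (V - cnbhd V E D))"
      using fin ne by simp
    then show ?thesis using False by simp
  qed
qed

definition blk :: "nat \<Rightarrow> nat \<Rightarrow> nat set" where
  "blk m b = {x. x < 5*m \<and> x div 5 = b}"

definition T :: "nat \<Rightarrow> nat set \<Rightarrow> nat \<Rightarrow> nat" where
  "T m D b = (if blk m b \<subseteq> cnbhd (Vm m) (Em m) D then 0 else 3 - card (D \<inter> blk m b))"

definition phi :: "nat \<Rightarrow> nat set \<Rightarrow> nat" where
  "phi m D = (\<Sum>b<m. T m D b)"

lemma fin_blk: "finite (blk m b)"
  unfolding blk_def by (rule finite_subset[of _ "{..<5*m}"]) auto

lemma sub_un_lem: "A \<inter> X = {} \<Longrightarrow> (X \<subseteq> A \<union> B) = (X \<subseteq> B)" by blast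

lemma T_other:
  assumes "b' \<noteq> u div 5"
  shows "T m (insert u D) b' = T m D b'"
proof -
  have "u \<notin> blk m b'" unfolding blk_def mem_Collect_eq using assms by metis
  then have 1: "insert u D \<inter> blk m b' = D \<inter> blk m b'" by blast
  have "cnbhd (Vm m) (Em m) {u} \<inter> blk m b' = {}"
  proof -
    { fix w assume w1: "w \<in> cnbhd (Vm m) (Em m) {u}" and w2: "w \<in> blk m b'"
      from w1 have "w div 5 = u div 5" unfolding N1 by blast
      moreover from w2 have "w div 5 = b'" unfolding blk_def by blast
      ultimately have False using assms by simp }
    then show ?thesis by blast
  qed
  then have "blk m b' \<subseteq> cnbhd (Vm m) (Em m) (insert u D) \<longleftrightarrow> blk m b' \<subseteq> cnbhd (Vm m) (Em m) D"
    by (subst cn_insert) (rule sub_un_lem)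
  then show ?thesis unfolding T_def 1 by (simp only:)
qed

lemma T_step:
  assumes v: "v \<in> Vm m - cnbhd (Vm m) (Em m) D"
  shows "\<exists>u\<in>cnbhd (Vm m) (Em m) {v}. u div 5 = v div 5 \<and> T m D (v div 5) \<le> Suc (T m (insert u D) (v div 5))"
proof -
  define b where "b = v div 5"
  define j where "j = v mod 5"
  define c where "c = card (D \<inter> blk m b)"
  have vlt: "v < 5*m" using v by (simp add: Vm_def)
  have bm: "b < m" using vlt b_def by auto
  have j5: "j < 5" by (simp add: j_def)
  have vblk: "v \<in> blk m b" using vlt by (simp add: blk_def b_def)
  have vN: "v \<in> cnbhd (Vm m) (Em m) {v}" using vlt by (simp add: N1 nb5_def)
  have Told: "T m D b = 3 - c"
    using v vblk by (auto simp: T_def c_def)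
  show ?thesis
  proof (cases "c \<ge> 2")
    case True
    then show ?thesis using vN Told b_def by auto
  next
    case False
    have "\<exists>i<5. D \<inter> blk m b \<subseteq> {5*b+i} \<and> \<not> nb5 i j"
    proof (cases "c = 0")
      case True
      then have "D \<inter> blk m b = {}" using fin_blk[of m b] by (simp add: c_def)
      moreover have "\<not> nb5 ((j+2) mod 5) j" using posC_all j5 by auto
      ultimately show ?thesis by (intro exI[of _ "(j+2) mod 5"]) auto
    next
      case c0: False
      with False have "c = 1" by auto
      then obtain x where x: "D \<inter> blk m b = {x}" by (auto simp: c_def card_Suc_eq)
      then have xD: "x \<in> D" and xb: "x < 5*m" "x div 5 = b" by (auto simp: blk_def)
      have xe: "x = 5*b + x mod 5" using xb(2) by (metis div_mult_mod_eq mult.commute)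
      have "\<not> nb5 (x mod 5) j"
      proof
        assume "nb5 (x mod 5) j"
        then have "v \<in> cnbhd (Vm m) (Em m) {x}" using xb vlt by (simp add: N1 b_def j_def)
        then have "v \<in> cnbhd (Vm m) (Em m) D" using xD cn_UN by metis
        then show False using v by simp
      qed
      then show ?thesis using x xe by (intro exI[of _ "x mod 5"]) auto
    qed
    then obtain i where i5: "i < 5" and Dsub: "D \<inter> blk m b \<subseteq> {5*b+i}" and nij: "\<not> nb5 i j" by blast
    obtain k l where k5: "k < 5" and l5: "l < 5" and njk: "nb5 j k" and nil: "\<not> nb5 i l" and nkl: "\<not> nb5 k l"
      using posB[OF i5 j5 nij] by blast
    define u where "u = 5*b+k"
    define w where "w = 5*b+l"
    have ult: "u < 5*m" using bm k5 by (simp add: u_def)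
    have wlt: "w < 5*m" using bm l5 by (simp add: w_def)
    have udm: "u div 5 = b" "u mod 5 = k" using dm5[OF k5] by (auto simp: u_def)
    have wdm: "w div 5 = b" "w mod 5 = l" using dm5[OF l5] by (auto simp: w_def)
    have uN: "u \<in> cnbhd (Vm m) (Em m) {v}" using ult vlt udm njk by (simp add: N1 b_def j_def)
    have wblk: "w \<in> blk m b" using wlt wdm by (simp add: blk_def)
    have wu: "w \<notin> cnbhd (Vm m) (Em m) {u}" using udm wdm nkl by (simp add: N1)
    have wD: "w \<notin> cnbhd (Vm m) (Em m) D"
    proof
      assume "w \<in> cnbhd (Vm m) (Em m) D"
      then obtain s where sD: "s \<in> D" and ws: "w \<in> cnbhd (Vm m) (Em m) {s}" using cn_UN by metis
      then have s: "s < 5*m" "s div 5 = b" "nb5 (s mod 5) l" using wdm by (auto simp: N1)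
      then have "s \<in> D \<inter> blk m b" using sD by (simp add: blk_def)
      then have "s = 5*b+i" using Dsub by auto
      then have "s mod 5 = i" using dm5[OF i5] by simp
      then show False using s nil by simp
    qed
    have "w \<notin> cnbhd (Vm m) (Em m) (insert u D)" using wu wD cn_insert[of "Vm m" "Em m" u D] by blast
    then have nd: "\<not> blk m b \<subseteq> cnbhd (Vm m) (Em m) (insert u D)" using wblk by blast
    have "insert u D \<inter> blk m b \<subseteq> insert u (D \<inter> blk m b)" by blast
    then have "card (insert u D \<inter> blk m b) \<le> card (insert u (D \<inter> blk m b))"
      by (intro card_mono) (use fin_blk in auto)
    also have "\<dots> \<le> Suc c" unfolding c_def by (rule card_insert_le_m1) (use fin_blk in auto)
    finally have "card (insert u D \<inter> blk m b) \<le> Suc c" .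
    then have "T m (insert u D) b \<ge> 3 - Suc c" using nd by (simp add: T_def)
    then have "T m D b \<le> Suc (T m (insert u D) b)" using Told False by linarith
    then show ?thesis using uN udm b_def by auto
  qed
qed



lemma blk_sub: "blk m b \<subseteq> Vm m"
  unfolding blk_def Vm_def by auto

lemma phi_dom: assumes "dominates (Vm m) (Em m) D" shows "phi m D = 0"
proof -
  have "\<And>b. T m D b = 0" using assms blk_sub unfolding T_def dominates_def by simp
  then show ?thesis unfolding phi_def by simp
qed

lemma phi_empty: "phi m {} = 3*m"
proof -
  have "cnbhd (Vm m) (Em m) {} = {}" by (simp add: cnbhd_def)
  moreover have "\<And>b. b < m \<Longrightarrow> 5*b \<in> blk m b" by (simp add: blk_def)
  ultimately have "\<And>b. b < m \<Longrightarrow> \<not> blk m b \<subseteq> cnbhd (Vm m) (Em m) {}" by blast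
  then have "\<And>b. b < m \<Longrightarrow> T m {} b = 3" unfolding T_def by simp
  then show ?thesis unfolding phi_def by simp
qed

lemma phi_step:
  assumes v: "v \<in> Vm m - cnbhd (Vm m) (Em m) D"
  shows "\<exists>u\<in>cnbhd (Vm m) (Em m) {v}. phi m D \<le> Suc (phi m (insert u D))"
proof -
  obtain u where u: "u \<in> cnbhd (Vm m) (Em m) {v}" and ub: "u div 5 = v div 5"
    and le: "T m D (v div 5) \<le> Suc (T m (insert u D) (v div 5))"
    using T_step[OF v] by blast
  have bm: "v div 5 \<in> {..<m}" using v by (auto simp: Vm_def)
  have "phi m D = T m D (v div 5) + (\<Sum>b\<in>{..<m} - {v div 5}. T m D b)"
    unfolding phi_def using bm by (simp add: sum.remove)
  also have "(\<Sum>b\<in>{..<m} - {v div 5}. T m D b) = (\<Sum>b\<in>{..<m} - {v div 5}. T m (insert u D) b)"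
  proof (rule sum.cong)
    fix b assume "b \<in> {..<m} - {v div 5}"
    then have "b \<noteq> u div 5" using ub by simp
    then show "T m D b = T m (insert u D) b" using T_other[of b u m D] by simp
  qed simp
  also have "phi m (insert u D) = T m (insert u D) (v div 5) + (\<Sum>b\<in>{..<m} - {v div 5}. T m (insert u D) b)"
    unfolding phi_def using bm by (simp add: sum.remove)
  ultimately have "phi m D \<le> Suc (phi m (insert u D))" using le by linarith
  then show ?thesis using u by blast
qed

lemma gamma_lb: "3*m \<le> indicated_domination_number (Vm m) (Em m)"
proof -
  have "min (card (Vm m)) (phi m {}) \<le> igame_val (Vm m) (Em m) (card (Vm m)) {}"
  proof (rule game_lb)
    show "finite (Vm m)" by (simp add: Vm_def)
    show "\<And>D. dominates (Vm m) (Em m) D \<Longrightarrow> phi m D = 0" by (rule phi_dom)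
    show "\<And>D v. \<not> dominates (Vm m) (Em m) D \<Longrightarrow> v \<in> Vm m - cnbhd (Vm m) (Em m) D \<Longrightarrow>
                 \<exists>u\<in>cnbhd (Vm m) (Em m) {v}. phi m D \<le> Suc (phi m (insert u D))"
      by (rule phi_step)
  qed
  then show ?thesis by (simp add: indicated_domination_number_def phi_empty Vm_def)
qed



lemma priv:
  assumes "irredundant V E S" "x \<in> S"
  obtains w where "w \<in> cnbhd V E {x}" "\<And>y. y \<in> S \<Longrightarrow> y \<noteq> x \<Longrightarrow> w \<notin> cnbhd V E {y}"
proof -
  from assms obtain w where w: "w \<in> private_nbrs V E S x" unfolding irredundant_def by blast
  then have w1: "w \<in> cnbhd V E S" and w2: "w \<notin> cnbhd V E (S - {x})"
    unfolding private_nbrs_def by auto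
  have a: "w \<in> cnbhd V E {x}"
  proof -
    from w1 obtain s where "s \<in> S" "w \<in> cnbhd V E {s}" using cn_UN by metis
    moreover have "s \<notin> S - {x}" using w2 calculation cn_UN[of w V E "S - {x}"] by blast
    ultimately show ?thesis by auto
  qed
  have b: "w \<notin> cnbhd V E {y}" if "y \<in> S" "y \<noteq> x" for y
    using w2 that cn_UN[of w V E "S - {x}"] by blast
  show ?thesis using that a b by blast
qed

lemma three:
  assumes "3 \<le> card A"
  obtains x y z where "x \<in> A" "y \<in> A" "z \<in> A" "x \<noteq> y" "x \<noteq> z" "y \<noteq> z"
proof -
  from assms obtain x B where "A = insert x B" "x \<notin> B" "2 \<le> card B" "finite B"
    using card_le_Suc_iff[of 2 A] by auto
  moreover from this obtain y C where "B = insert y C" "y \<notin> C" "1 \<le> card C" "finite C"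
    using card_le_Suc_iff[of 1 B] by auto
  moreover from this obtain z where "z \<in> C" by (metis card.empty ex_in_conv not_one_le_zero)
  ultimately show ?thesis using that by blast
qed

lemma irr_blk:
  assumes irr: "irredundant (Vm m) (Em m) S"
  shows "card (S \<inter> blk m b) \<le> 2"
proof (rule ccontr)
  assume "\<not> card (S \<inter> blk m b) \<le> 2"
  then have "3 \<le> card (S \<inter> blk m b)" by simp
  then obtain x y z where xyz: "x \<in> S \<inter> blk m b" "y \<in> S \<inter> blk m b" "z \<in> S \<inter> blk m b"
    "x \<noteq> y" "x \<noteq> z" "y \<noteq> z" by (rule three)
  have d: "x div 5 = b" "y div 5 = b" "z div 5 = b" "x < 5*m" "y < 5*m" "z < 5*m"
    using xyz unfolding blk_def by auto
  have key: "\<exists>l<5. nb5 (p mod 5) l \<and> \<not> nb5 (q mod 5) l \<and> \<not> nb5 (r mod 5) l"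
    if p: "p \<in> S" "p div 5 = b" and q: "q \<in> S" "q div 5 = b" "q \<noteq> p"
       and r: "r \<in> S" "r div 5 = b" "r \<noteq> p" for p q r
  proof -
    obtain w where w: "w \<in> cnbhd (Vm m) (Em m) {p}"
      and nw: "\<And>y. y \<in> S \<Longrightarrow> y \<noteq> p \<Longrightarrow> w \<notin> cnbhd (Vm m) (Em m) {y}"
      using priv[OF irr p(1)] by blast
    have wp: "w < 5*m" "w div 5 = p div 5" "nb5 (p mod 5) (w mod 5)" using w unfolding N1 by auto
    have "q < 5*m" "r < 5*m" using q r irr unfolding irredundant_def Vm_def by auto
    then have "\<not> nb5 (q mod 5) (w mod 5)" "\<not> nb5 (r mod 5) (w mod 5)"
      using nw[OF q(1) q(3)] nw[OF r(1) r(3)] wp p q r unfolding N1 by auto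
    then show ?thesis using wp by (intro exI[of _ "w mod 5"]) auto
  qed
  have ne: "x mod 5 \<noteq> y mod 5" "x mod 5 \<noteq> z mod 5" "y mod 5 \<noteq> z mod 5"
    using d xyz(4-6) by (metis div_mult_mod_eq)+
  obtain l1 where "l1 < 5" "nb5 (x mod 5) l1" "\<not> nb5 (y mod 5) l1" "\<not> nb5 (z mod 5) l1"
    using key[of x y z] xyz d by auto
  moreover obtain l2 where "l2 < 5" "nb5 (y mod 5) l2" "\<not> nb5 (x mod 5) l2" "\<not> nb5 (z mod 5) l2"
    using key[of y x z] xyz d by auto
  moreover obtain l3 where "l3 < 5" "nb5 (z mod 5) l3" "\<not> nb5 (x mod 5) l3" "\<not> nb5 (y mod 5) l3"
    using key[of z x y] xyz d by auto
  ultimately show False using posA[of "x mod 5" "y mod 5" "z mod 5"] ne by auto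
qed

lemma irr_card:
  assumes irr: "irredundant (Vm m) (Em m) S"
  shows "card S \<le> 2*m"
proof -
  have sub: "S \<subseteq> (\<Union>b\<in>{..<m}. S \<inter> blk m b)"
    using irr unfolding irredundant_def Vm_def blk_def by auto
  have "card S \<le> card (\<Union>b\<in>{..<m}. S \<inter> blk m b)"
    by (rule card_mono[OF _ sub]) (use fin_blk in auto)
  also have "\<dots> \<le> (\<Sum>b\<in>{..<m}. card (S \<inter> blk m b))" by (rule card_UN_le) simp
  also have "\<dots> \<le> (\<Sum>b\<in>{..<m}. 2)" by (rule sum_mono) (rule irr_blk[OF irr])
  finally show ?thesis by simp
qed

lemma IR_ub: "upper_irredundance (Vm m) (Em m) \<le> 2*m"
proof -
  let ?F = "{S. irredundant (Vm m) (Em m) S}"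
  have finF: "finite ?F"
    by (rule finite_subset[of _ "Pow (Vm m)"]) (auto simp: irredundant_def Vm_def)
  have "{} \<in> ?F" by (simp add: irredundant_def)
  then obtain S where S: "S \<in> ?F" and Smax: "\<And>T. T \<in> ?F \<Longrightarrow> S \<le> T \<Longrightarrow> S = T"
    using finite_has_maximal[OF finF] by blast
  have "maximal_irredundant (Vm m) (Em m) S"
    unfolding maximal_irredundant_def using S Smax by auto
  then have ne: "{card S |S. maximal_irredundant (Vm m) (Em m) S} \<noteq> {}" by blast
  have fin: "finite {card S |S. maximal_irredundant (Vm m) (Em m) S}"
  proof -
    have "{card S |S. maximal_irredundant (Vm m) (Em m) S} \<subseteq> card ` ?F"
      unfolding maximal_irredundant_def by auto
    then show ?thesis using finF finite_subset by blast
  qed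
  show ?thesis unfolding upper_irredundance_def
    by (rule Max.boundedI[OF fin ne]) (auto simp: maximal_irredundant_def dest: irr_card)
qed

theorem corollary6p3:
  fixes M :: int
  shows "\<exists>(V :: nat set) E. simple_graph V E \<and>
           int (indicated_domination_number V E) - int (upper_irredundance V E) \<ge> M"
proof -
  define m where "m = nat M"
  have "3*m \<le> indicated_domination_number (Vm m) (Em m)" by (rule gamma_lb)
  moreover have "upper_irredundance (Vm m) (Em m) \<le> 2*m" by (rule IR_ub)
  ultimately have "int (indicated_domination_number (Vm m) (Em m)) - int (upper_irredundance (Vm m) (Em m)) \<ge> M"
    unfolding m_def by linarith
  then show ?thesis using sg by blast
qed

end
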